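(* Let $F$ be a set of graphs containing $N_0$ and $N_1$ and closed under arbitrary $f$-unions. Setting $F(H)=\mathbb{Z}_2^{*V(H)}$ for all $H\in F$ (and $F(H)=\emptyset$ otherwise) turns $F$ into a graph fibration, which corresponds to the skew graph category $\mathscr{C}$ with $\mathscr{C}(k,l)=\{(H,\mathbf{a},\mathbf{b})\mid H\in F,\ \mathbf{a}\in V(H)^k,\ \mathbf{b}\in V(H)^l\}$. Let $G$ be a graph and $K$ the greatest subgraph of $G$ contained in $F$ (a subgraph $K\subset G$ with $K\in F$ such that every subgraph $H\subset G$ with $H\in F$ satisfies $H\subset K$), and identify $V(K)=V(G)=\{1,\dots,n\}$ via the inclusion. Then the quantum group corresponding to the representation category $\mathscr{C}^G$ is the group $\mathrm{Aut}\,K\subset S_n$.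
   Context: Graphs are finite, undirected, without multiple edges, loops allowed, up to isomorphism; $N_k$ is the edgeless graph on $k$ vertices; graph homomorphisms map edges (including loops) to edges. $\mathbb{Z}_2^{*V}$ is the group generated by the set $V$ subject to $v^2=e$; $g_{\mathbf{a}}$ denotes the product of the entries of a tuple $\mathbf{a}$. A vertex overlap of graphs $K,H$ is a subset $f\subset V(K)\times V(H)$ in which each vertex occurs at most once; $K\cup_fH$ is the quotient of $K\sqcup H$ identifying $v$ with $w$ for $(v,w)\in f$ (edges between quotient vertices iff between some representatives), with induced maps $f_K,f_H$. Graph fibration: a set of pairs $(K,a)$, $a\in\mathbb{Z}_2^{*V(K)}$, up to isomorphism, containing $(N_0,e),(N_1,e)$, such that each $F(K)=\{a\mid(K,a)\in F\}$ is empty or a normal subgroup, invariant under $\mathrm{Aut}\,K$, and $(K,a),(H,b)\in F$ implies $(K\cup_fH,f_K(a)f_H(b))\in F$ for all vertex overlaps $f$. A bilabelled graph is $(K,\mathbf{a},\mathbf{b})$ with tuples $\mathbf{a}\in V(K)^k$, $\mathbf{b}\in V(K)^l$; a fibration $F$ corresponds to the skew graph category $\{(K,\mathbf{a},\mathbf{b})\mid(K,g_{\mathbf{a}}^{-1}g_{\mathbf{b}})\in F\}$ (a skew graph category is a set of bilabelled graphs containing $(N_0,\emptyset,\emptyset)$, $(M,(v),(v))$, $(M,\emptyset,(v,v))$ for the one-vertex graph $M$, closed under $f$-unions $(K,\mathbf{a},\mathbf{b})\cup_f(H,\mathbf{c},\mathbf{d})=(K\cup_fH,f_K(\mathbf{a})f_H(\mathbf{c}),f_K(\mathbf{b})f_H(\mathbf{d}))$,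 involution and compositions of bilabelled graphs whose matched tuples have the same pattern of equal entries). With $V(G)=\{1,\dots,n\}$, $\hat T^G_{(H,\mathbf{a},\mathbf{b})}\colon(\mathbb{C}^n)^{\otimes k}\to(\mathbb{C}^n)^{\otimes l}$ has $(\mathbf{j},\mathbf{i})$-entry $\#\{\phi\colon H\to G\text{ injective homomorphism}\mid\phi(\mathbf{a})=\mathbf{i},\phi(\mathbf{b})=\mathbf{j}\}$, and $\mathscr{C}^G(k,l)=\mathrm{span}\{\hat T^G_{\mathbf{H}}\mid\mathbf{H}\in\mathscr{C}(k,l)\}$. The quantum group corresponding to such a representation category is the unique orthogonal compact matrix quantum group $(A,u)$ with $\mathrm{Mor}(u^{\otimes k},u^{\otimes l})=\{T\mid Tu^{\otimes k}=u^{\otimes l}T\}=\mathscr{C}^G(k,l)$ for all $k,l$ (Woronowicz–Tannaka–Krein duality). A permutation group $H\subset S_n$ is viewed as the quantum group $(O(H),v)$ with $v_{ij}(\sigma)=\delta_{i\sigma(j)}$, whose intertwiners are the $T$ commuting with $A_\sigma^{\otimes}$ for all permutation matrices $A_\sigma$, $\sigma\in H$. *)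

theory Defs
  imports Complex_Main "HOL-Library.FuncSet" "HOL-Combinatorics.Permutations"
begin

text \<open>Finite undirected graphs with loops allowed, on vertices drawn from nat.\<close>
record graph =
  verts :: "nat set"
  adj :: "nat \<Rightarrow> nat \<Rightarrow> bool"

definition wf_graph :: "graph \<Rightarrow> bool" where
  "wf_graph H \<longleftrightarrow> finite (verts H) \<and>
     (\<forall>u v. adj H u v \<longrightarrow> u \<in> verts H \<and> v \<in> verts H) \<and>
     (\<forall>u v. adj H u v \<longrightarrow> adj H v u)"

definition graph_iso :: "graph \<Rightarrow> graph \<Rightarrow> bool" where
  "graph_iso H H' \<longleftrightarrow> (\<exists>p. bij_betw p (verts H) (verts H') \<and>
     (\<forall>u\<in>verts H. \<forall>v\<in>verts H. adj H u v \<longleftrightarrow> adj H' (p u) (p v)))"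

definition N0 :: graph where "N0 = \<lparr>verts = {}, adj = (\<lambda>_ _. False)\<rparr>"
definition N1 :: graph where "N1 = \<lparr>verts = {0}, adj = (\<lambda>_ _. False)\<rparr>"

definition vertex_overlap :: "graph \<Rightarrow> graph \<Rightarrow> (nat \<times> nat) set \<Rightarrow> bool" where
  "vertex_overlap K H f \<longleftrightarrow> f \<subseteq> verts K \<times> verts H \<and>
     (\<forall>(a,b)\<in>f. \<forall>(c,d)\<in>f. a = c \<longleftrightarrow> b = d)"

text \<open>X (with the induced maps i, j) is the f-union of K and H: the quotient of the
  disjoint union identifying v with w for (v,w) in f, with edges between quotient
  vertices iff there is an edge between some representatives.\<close>
definition is_f_union ::
  "graph \<Rightarrow> graph \<Rightarrow> (nat \<times> nat) set \<Rightarrow> graph \<Rightarrow> (nat \<Rightarrow> nat) \<Rightarrow> (nat \<Rightarrow> nat) \<Rightarrow> bool" where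
  "is_f_union K H f X i j \<longleftrightarrow>
     inj_on i (verts K) \<and> inj_on j (verts H) \<and>
     verts X = i ` verts K \<union> j ` verts H \<and>
     (\<forall>v\<in>verts K. \<forall>w\<in>verts H. i v = j w \<longleftrightarrow> (v, w) \<in> f) \<and>
     (\<forall>x y. adj X x y \<longleftrightarrow>
        (\<exists>u v. adj K u v \<and> i u = x \<and> i v = y) \<or> (\<exists>u v. adj H u v \<and> j u = x \<and> j v = y))"

definition subgraph :: "graph \<Rightarrow> graph \<Rightarrow> bool" where
  "subgraph H G \<longleftrightarrow> verts H \<subseteq> verts G \<and> (\<forall>u v. adj H u v \<longrightarrow> adj G u v)"

definition idx :: "nat \<Rightarrow> nat \<Rightarrow> nat list set" where
  "idx n k = {xs. length xs = k \<and> set xs \<subseteq> {1..n}}"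

definition inj_hom :: "graph \<Rightarrow> graph \<Rightarrow> (nat \<Rightarrow> nat) \<Rightarrow> bool" where
  "inj_hom H G \<phi> \<longleftrightarrow> \<phi> ` verts H \<subseteq> verts G \<and> inj_on \<phi> (verts H) \<and>
     (\<forall>u v. adj H u v \<longrightarrow> adj G (\<phi> u) (\<phi> v))"

text \<open>Linear maps (C^n)^{\<otimes>k} \<rightarrow> (C^n)^{\<otimes>l} as functions T j i (j output, i input multi-index).
  hatT G H a b has (j,i)-entry the number of injective homomorphisms \<phi>: H \<rightarrow> G with
  \<phi>(a) = i, \<phi>(b) = j.\<close>
definition hatT :: "graph \<Rightarrow> graph \<Rightarrow> nat list \<Rightarrow> nat list \<Rightarrow> nat list \<Rightarrow> nat list \<Rightarrow> complex" where
  "hatT G H a b = (\<lambda>j i. of_nat (card {\<phi> \<in> verts H \<rightarrow>\<^sub>E verts G.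
       inj_hom H G \<phi> \<and> map \<phi> a = i \<and> map \<phi> b = j}))"

definition skewcat :: "(graph \<Rightarrow> bool) \<Rightarrow> nat \<Rightarrow> nat \<Rightarrow> (graph \<times> nat list \<times> nat list) set" where
  "skewcat F k l = {(H, a, b). F H \<and> length a = k \<and> set a \<subseteq> verts H \<and>
                                    length b = l \<and> set b \<subseteq> verts H}"

definition cspan :: "(nat list \<Rightarrow> nat list \<Rightarrow> complex) set \<Rightarrow> (nat list \<Rightarrow> nat list \<Rightarrow> complex) set" where
  "cspan S = {T. \<exists>A c. finite A \<and> A \<subseteq> S \<and> T = (\<lambda>j i. \<Sum>X\<in>A. c X * X j i)}"

definition CG :: "(graph \<Rightarrow> bool) \<Rightarrow> graph \<Rightarrow> nat \<Rightarrow> nat \<Rightarrow> (nat list \<Rightarrow> nat list \<Rightarrow> complex) set" where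
  "CG F G k l = cspan {hatT G H a b | H a b. (H, a, b) \<in> skewcat F k l}"

text \<open>Entries of the tensor power A_\<sigma>^{\<otimes>k}, where (A_\<sigma>)_{ij} = \<delta>_{i \<sigma>(j)}.\<close>
definition perm_tensor :: "(nat \<Rightarrow> nat) \<Rightarrow> nat list \<Rightarrow> nat list \<Rightarrow> complex" where
  "perm_tensor \<sigma> i j = (\<Prod>r<length i. if i ! r = \<sigma> (j ! r) then 1 else 0)"

definition aut_group :: "nat \<Rightarrow> graph \<Rightarrow> (nat \<Rightarrow> nat) set" where
  "aut_group n K = {\<sigma>. \<sigma> permutes {1..n} \<and> \<sigma> ` verts K = verts K \<and>
                        (\<forall>u v. adj K u v \<longleftrightarrow> adj K (\<sigma> u) (\<sigma> v))}"

text \<open>Intertwiner space Mor(v^{\<otimes>k}, v^{\<otimes>l}) of a permutation group P \<subseteq> S_n: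
  maps T (supported on the index sets) with T A_\<sigma>^{\<otimes>k} = A_\<sigma>^{\<otimes>l} T for all \<sigma> in P.\<close>
definition perm_intertwiners ::
  "nat \<Rightarrow> (nat \<Rightarrow> nat) set \<Rightarrow> nat \<Rightarrow> nat \<Rightarrow> (nat list \<Rightarrow> nat list \<Rightarrow> complex) set" where
  "perm_intertwiners n P k l = {T.
     (\<forall>j i. \<not> (j \<in> idx n l \<and> i \<in> idx n k) \<longrightarrow> T j i = 0) \<and>
     (\<forall>\<sigma>\<in>P. \<forall>j\<in>idx n l. \<forall>i\<in>idx n k.
        (\<Sum>m\<in>idx n k. T j m * perm_tensor \<sigma> m i) = (\<Sum>m\<in>idx n l. perm_tensor \<sigma> j m * T m i))}"

end

theory Submission
  imports Defs
begin

lemma idx_finite: "finite (idx n k)"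
proof -
  have "idx n k = {xs. set xs \<subseteq> {1..n} \<and> length xs = k}" unfolding idx_def by auto
  thus ?thesis using finite_lists_length_eq[of "{1..n}" k] by simp
qed

lemma map_idx: "\<sigma> permutes {1..n} \<Longrightarrow> xs \<in> idx n k \<Longrightarrow> map \<sigma> xs \<in> idx n k"
  unfolding idx_def using permutes_in_image by fastforce

lemma map_idx_iff: "\<sigma> permutes {1..n} \<Longrightarrow> map \<sigma> xs \<in> idx n k \<longleftrightarrow> xs \<in> idx n k"
  unfolding idx_def using permutes_in_image[of \<sigma> "{1..n}"] by auto

lemma map_perm_eq_iff: "\<sigma> permutes S \<Longrightarrow> map \<sigma> xs = map \<sigma> ys \<longleftrightarrow> xs = ys"
  using permutes_inj by (metis list.inj_map inj_eq)

lemma perm_tensor_eq: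
  assumes "length m = length i"
  shows "perm_tensor \<sigma> m i = (if m = map \<sigma> i then 1 else 0)"
proof (cases "m = map \<sigma> i")
  case True thus ?thesis unfolding perm_tensor_def by (simp)
next
  case False
  then obtain r where r: "r < length i" "m ! r \<noteq> \<sigma> (i ! r)"
    using assms by (metis length_map list_eq_iff_nth_eq nth_map)
  thus ?thesis unfolding perm_tensor_def using False assms
    by (intro trans[OF prod_zero]) (auto intro!: bexI[of _ r])
qed

lemma sum_pt1:
  assumes "\<sigma> permutes {1..n}" "i \<in> idx n k"
  shows "(\<Sum>m\<in>idx n k. f m * perm_tensor \<sigma> m i) = f (map \<sigma> i)"
proof -
  have "(\<Sum>m\<in>idx n k. f m * perm_tensor \<sigma> m i) = (\<Sum>m\<in>idx n k. if m = map \<sigma> i then f m else 0)"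
    by (rule sum.cong) (use assms in \<open>auto simp: perm_tensor_eq idx_def\<close>)
  also have "\<dots> = f (map \<sigma> i)" using map_idx[OF assms] idx_finite by (simp add: sum.delta')
  finally show ?thesis .
qed

lemma sum_pt2:
  assumes "\<sigma> permutes {1..n}" "j \<in> idx n l"
  shows "(\<Sum>m\<in>idx n l. perm_tensor \<sigma> j m * f m) = f (map (inv \<sigma>) j)"
proof -
  have e: "j = map \<sigma> m \<longleftrightarrow> m = map (inv \<sigma>) j" for m
    using permutes_inverses[OF assms(1)] by (auto simp: map_idI)
  have "(\<Sum>m\<in>idx n l. perm_tensor \<sigma> j m * f m) = (\<Sum>m\<in>idx n l. if m = map (inv \<sigma>) j then f m else 0)"
    by (rule sum.cong) (use assms in \<open>auto simp: perm_tensor_eq idx_def e\<close>)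
  also have "\<dots> = f (map (inv \<sigma>) j)" using map_idx[OF permutes_inv[OF assms(1)] assms(2)] idx_finite
    by (simp add: sum.delta')
  finally show ?thesis .
qed

lemma cspan_sum:
  assumes "finite I" "\<And>x. x \<in> I \<Longrightarrow> g x \<in> S"
  shows "(\<lambda>j i. \<Sum>x\<in>I. c x * g x j i) \<in> cspan S"
proof -
  define c' where "c' X = (\<Sum>x\<in>{x\<in>I. g x = X}. c x)" for X
  have "(\<Sum>x\<in>I. c x * g x j i) = (\<Sum>X\<in>g ` I. c' X * X j i)" for j i
  proof -
    have "(\<Sum>x\<in>I. c x * g x j i) = (\<Sum>X\<in>g ` I. \<Sum>x\<in>{x\<in>I. g x = X}. c x * g x j i)"
      by (rule sum.image_gen[OF assms(1)])
    also have "\<dots> = (\<Sum>X\<in>g ` I. c' X * X j i)"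
      unfolding c'_def sum_distrib_right by (intro sum.cong refl) auto
    finally show ?thesis .
  qed
  thus ?thesis unfolding cspan_def using assms by (intro CollectI exI[of _ "g ` I"] exI[of _ c']) auto
qed

lemma aut_inv:
  assumes "\<sigma> \<in> aut_group n K"
  shows "inv \<sigma> \<in> aut_group n K"
proof -
  have p: "\<sigma> permutes {1..n}" and im: "\<sigma> ` verts K = verts K"
    and ad: "\<And>u v. adj K u v \<longleftrightarrow> adj K (\<sigma> u) (\<sigma> v)" using assms by (auto simp: aut_group_def)
  have "inv \<sigma> ` verts K = verts K"
    by (metis im image_inv_f_f permutes_inj[OF p])
  moreover have "adj K u v \<longleftrightarrow> adj K (inv \<sigma> u) (inv \<sigma> v)" for u v
    using ad[of "inv \<sigma> u" "inv \<sigma> v"] permutes_inverses[OF p] by simp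
  ultimately show ?thesis using permutes_inv[OF p] by (simp add: aut_group_def)
qed

lemma injhom_aut:
  assumes wf: "wf_graph K" and KV: "verts K = {1..n}"
    and im: "\<phi> ` {1..n} \<subseteq> {1..n}" and inj: "inj_on \<phi> {1..n}"
    and hom: "\<And>u v. adj K u v \<Longrightarrow> adj K (\<phi> u) (\<phi> v)"
  shows "(\<lambda>x. if x \<in> {1..n} then \<phi> x else x) \<in> aut_group n K"
proof -
  define V where "V = {1..n::nat}"
  define \<sigma> where "\<sigma> = (\<lambda>x. if x \<in> V then \<phi> x else x)"
  have imV: "\<phi> ` V = V"
  proof -
    have "card (\<phi> ` V) = card V" using card_image[OF inj] unfolding V_def .
    thus ?thesis using card_subset_eq[of V "\<phi> ` V"] im unfolding V_def by simp
  qed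
  have bij: "bij_betw \<sigma> V V"
  proof -
    have "bij_betw \<phi> V V" using imV inj unfolding bij_betw_def V_def by simp
    moreover have "\<And>x. x \<in> V \<Longrightarrow> \<sigma> x = \<phi> x" unfolding \<sigma>_def by simp
    ultimately show ?thesis using bij_betw_cong by blast
  qed
  have perm: "\<sigma> permutes V" by (rule bij_imp_permutes[OF bij]) (auto simp: \<sigma>_def)
  define E where "E = {(u,v). adj K u v}"
  have EV: "E \<subseteq> V \<times> V" using wf KV unfolding wf_graph_def E_def V_def by auto
  hence fE: "finite E" by (rule finite_subset) (simp add: V_def)
  define h where "h = (\<lambda>(u,v). (\<phi> u, \<phi> v))"
  have hinj: "inj_on h E" using EV inj unfolding h_def inj_on_def V_def by auto
  have hE: "h ` E \<subseteq> E" using hom unfolding h_def E_def by auto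
  have hEq: "h ` E = E" using card_subset_eq[OF fE hE] card_image[OF hinj] by simp
  have "adj K u v \<longleftrightarrow> adj K (\<sigma> u) (\<sigma> v)" for u v
  proof
    assume a: "adj K u v"
    hence "u \<in> V" "v \<in> V" using EV unfolding E_def by auto
    thus "adj K (\<sigma> u) (\<sigma> v)" using hom[OF a] by (simp add: \<sigma>_def)
  next
    assume a: "adj K (\<sigma> u) (\<sigma> v)"
    hence "\<sigma> u \<in> V" "\<sigma> v \<in> V" using EV unfolding E_def by auto
    hence uv: "u \<in> V" "v \<in> V" using permutes_in_image[OF perm] by auto
    hence "(\<phi> u, \<phi> v) \<in> h ` E" using a hEq unfolding E_def \<sigma>_def by simp
    then obtain u' v' where "(u',v') \<in> E" "\<phi> u' = \<phi> u" "\<phi> v' = \<phi> v" unfolding h_def by auto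
    moreover hence "u' \<in> V" "v' \<in> V" using EV by auto
    ultimately have "u' = u" "v' = v" using uv inj inj_onD unfolding V_def by metis+
    thus "adj K u v" using \<open>(u',v') \<in> E\<close> unfolding E_def by simp
  qed
  moreover have "\<sigma> ` verts K = verts K" using perm KV permutes_image V_def by blast
  ultimately have "\<sigma> \<in> aut_group n K" using perm unfolding aut_group_def V_def by blast
  thus ?thesis unfolding \<sigma>_def V_def .
qed

theorem proposition4p17:
  fixes F :: "graph \<Rightarrow> bool" and G K :: graph and n :: nat
  assumes F_wf: "\<And>H. F H \<Longrightarrow> wf_graph H"
    and F_iso: "\<And>H H'. F H \<Longrightarrow> wf_graph H' \<Longrightarrow> graph_iso H H' \<Longrightarrow> F H'"
    and F_N0: "F N0" and F_N1: "F N1"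
    and F_union: "\<And>K' H f X i j. F K' \<Longrightarrow> F H \<Longrightarrow> vertex_overlap K' H f \<Longrightarrow>
                    wf_graph X \<Longrightarrow> is_f_union K' H f X i j \<Longrightarrow> F X"
    and G_wf: "wf_graph G" and G_verts: "verts G = {1..n}"
    and K_wf: "wf_graph K" and K_sub: "subgraph K G" and K_F: "F K"
    and K_greatest: "\<And>H. wf_graph H \<Longrightarrow> subgraph H G \<Longrightarrow> F H \<Longrightarrow> subgraph H K"
  shows "\<forall>k l. CG F G k l = perm_intertwiners n (aut_group n K) k l"
proof -
  define V where "V = {1..n}"
  define A where "A = aut_group n K"
  have finV: "finite V" by (simp add: V_def)
  have GV: "verts G = V" using G_verts V_def by simp
  have KV: "verts K = V"
  proof
    show "verts K \<subseteq> V" using K_sub GV unfolding subgraph_def by auto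
    show "V \<subseteq> verts K"
    proof
      fix v assume v: "v \<in> V"
      define Hv where "Hv = \<lparr>verts = {v}, adj = (\<lambda>_ _. False)\<rparr>"
      have wfHv: "wf_graph Hv" unfolding wf_graph_def Hv_def by simp
      have "graph_iso N1 Hv" unfolding graph_iso_def N1_def Hv_def
        by (rule exI[of _ "\<lambda>_. v"]) (auto simp: bij_betw_def)
      hence "F Hv" using F_iso[OF F_N1 wfHv] by simp
      moreover have "subgraph Hv G" using v GV unfolding subgraph_def Hv_def by simp
      ultimately have "subgraph Hv K" using K_greatest wfHv by blast
      thus "v \<in> verts K" unfolding subgraph_def Hv_def by simp
    qed
  qed
  have hom_eq: "inj_hom H G \<phi> \<longleftrightarrow> inj_hom H K \<phi>" if FH: "F H" for H \<phi>
  proof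
    assume h: "inj_hom H K \<phi>"
    thus "inj_hom H G \<phi>" using K_sub KV GV unfolding inj_hom_def subgraph_def by auto
  next
    assume h: "inj_hom H G \<phi>"
    have wfH: "wf_graph H" using F_wf FH .
    define H' where "H' = \<lparr>verts = \<phi> ` verts H, adj = (\<lambda>x y. \<exists>u v. adj H u v \<and> \<phi> u = x \<and> \<phi> v = y)\<rparr>"
    have wfH': "wf_graph H'" using wfH unfolding wf_graph_def H'_def by (auto; blast)
    have inj: "inj_on \<phi> (verts H)" using h unfolding inj_hom_def by simp
    have "graph_iso H H'" unfolding graph_iso_def
    proof (intro exI conjI ballI)
      show "bij_betw \<phi> (verts H) (verts H')" using inj unfolding H'_def bij_betw_def by simp
      fix u v assume uv: "u \<in> verts H" "v \<in> verts H"
      show "adj H u v \<longleftrightarrow> adj H' (\<phi> u) (\<phi> v)"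
      proof
        assume "adj H u v" thus "adj H' (\<phi> u) (\<phi> v)" unfolding H'_def by auto
      next
        assume "adj H' (\<phi> u) (\<phi> v)"
        then obtain u' v' where a: "adj H u' v'" "\<phi> u' = \<phi> u" "\<phi> v' = \<phi> v" unfolding H'_def by auto
        moreover have "u' \<in> verts H" "v' \<in> verts H" using a(1) wfH unfolding wf_graph_def by auto
        ultimately have "u' = u" "v' = v" using inj inj_onD uv by metis+
        thus "adj H u v" using a(1) by simp
      qed
    qed
    hence "F H'" using F_iso[OF FH wfH'] by simp
    moreover have "subgraph H' G" using h unfolding subgraph_def H'_def inj_hom_def by auto
    ultimately have sK: "subgraph H' K" using K_greatest wfH' by blast
    have "\<phi> ` verts H \<subseteq> verts K" using h KV GV unfolding inj_hom_def by simp
    moreover have "adj K (\<phi> u) (\<phi> v)" if "adj H u v" for u v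
    proof -
      have "adj H' (\<phi> u) (\<phi> v)" using that unfolding H'_def by auto
      thus ?thesis using sK unfolding subgraph_def by blast
    qed
    ultimately show "inj_hom H K \<phi>" using inj unfolding inj_hom_def by blast
  qed
  have hatGK: "hatT G H a b = hatT K H a b" if "F H" for H a b
    unfolding hatT_def GV KV using hom_eq[OF that] by simp
  have Aperm: "\<sigma> permutes V" if "\<sigma> \<in> A" for \<sigma> using that unfolding A_def aut_group_def V_def by simp
  have Aadj: "adj K u v \<longleftrightarrow> adj K (\<sigma> u) (\<sigma> v)" if "\<sigma> \<in> A" for \<sigma> u v
    using that unfolding A_def aut_group_def by simp
  have Ainv: "inv \<sigma> \<in> A" if "\<sigma> \<in> A" for \<sigma> using aut_inv that unfolding A_def by blast
  have Aid: "id \<in> A" unfolding A_def aut_group_def by simp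
  have Afin: "finite A"
  proof (rule finite_subset[OF _ finite_permutations[OF finV]])
    show "A \<subseteq> {p. p permutes V}" using Aperm by blast
  qed
  have Acard: "card A > 0" using Afin Aid card_gt_0_iff by blast
  have invinv: "map (inv \<sigma>) (map \<sigma> x) = x" "map \<sigma> (map (inv \<sigma>) x) = x" if "\<sigma> \<in> A" for \<sigma> x
    using permutes_inverses[OF Aperm[OF that]] by (simp_all add: map_idI)
  define S where "S H a b j i = {\<phi> \<in> verts H \<rightarrow>\<^sub>E V. inj_hom H K \<phi> \<and> map \<phi> a = i \<and> map \<phi> b = j}"
    for H a b j i
  have hatK: "hatT K H a b j i = of_nat (card (S H a b j i))" for H a b j i
    unfolding hatT_def S_def KV by simp
  have Sle: "card (S H a b j i) \<le> card (S H a b (map \<sigma> j) (map \<sigma> i))"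
    if FH: "F H" and sA: "\<sigma> \<in> A" and ab: "set a \<subseteq> verts H" "set b \<subseteq> verts H" for H a b j i \<sigma>
  proof -
    have finH: "finite (verts H)" using F_wf[OF FH] unfolding wf_graph_def by simp
    have fin: "finite (S H a b (map \<sigma> j) (map \<sigma> i))"
      by (rule finite_subset[OF _ finite_PiE[OF finH finV]]) (auto simp: S_def)
    define f where "f \<phi> = restrict (\<sigma> \<circ> \<phi>) (verts H)" for \<phi>
    have p: "\<sigma> permutes V" using Aperm[OF sA] .
    have "f ` S H a b j i \<subseteq> S H a b (map \<sigma> j) (map \<sigma> i)"
    proof
      fix \<psi> assume "\<psi> \<in> f ` S H a b j i"
      then obtain \<phi> where \<phi>: "\<phi> \<in> S H a b j i" and \<psi>: "\<psi> = f \<phi>" by blast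
      have \<phi>E: "\<phi> \<in> verts H \<rightarrow>\<^sub>E V" and hom: "inj_hom H K \<phi>" and ma: "map \<phi> a = i" "map \<phi> b = j"
        using \<phi> unfolding S_def by auto
      have "\<psi> \<in> verts H \<rightarrow>\<^sub>E V" using \<phi>E permutes_in_image[OF p] unfolding \<psi> f_def by auto
      moreover have "inj_hom H K \<psi>"
        unfolding inj_hom_def
      proof (intro conjI allI impI)
        show "\<psi> ` verts H \<subseteq> verts K" using \<phi>E permutes_in_image[OF p] KV unfolding \<psi> f_def by auto
        have "inj_on (\<sigma> \<circ> \<phi>) (verts H)" using hom permutes_inj_on[OF p] unfolding inj_hom_def
          by (simp add: comp_inj_on)
        thus "inj_on \<psi> (verts H)" unfolding \<psi> f_def by (simp add: inj_on_restrict_iff)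
        fix u v assume "adj H u v"
        moreover hence "u \<in> verts H" "v \<in> verts H" using F_wf[OF FH] unfolding wf_graph_def by auto
        ultimately show "adj K (\<psi> u) (\<psi> v)" using hom Aadj[OF sA] unfolding \<psi> f_def inj_hom_def by simp
      qed
      moreover have "map \<psi> a = map \<sigma> i" "map \<psi> b = map \<sigma> j"
        using ab ma unfolding \<psi> f_def by auto
      ultimately show "\<psi> \<in> S H a b (map \<sigma> j) (map \<sigma> i)" unfolding S_def by blast
    qed
    moreover have "inj_on f (S H a b j i)"
    proof (rule inj_onI)
      fix \<phi> \<psi> assume a: "\<phi> \<in> S H a b j i" "\<psi> \<in> S H a b j i" "f \<phi> = f \<psi>"
      show "\<phi> = \<psi>"
      proof (rule PiE_ext)
        show "\<phi> \<in> verts H \<rightarrow>\<^sub>E V" "\<psi> \<in> verts H \<rightarrow>\<^sub>E V" using a unfolding S_def by auto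
        fix x assume x: "x \<in> verts H"
        have "\<sigma> (\<phi> x) = \<sigma> (\<psi> x)" using fun_cong[OF a(3), of x] x unfolding f_def by simp
        thus "\<phi> x = \<psi> x" using permutes_inj[OF p] by (simp add: inj_eq)
      qed
    qed
    ultimately show ?thesis using card_inj_on_le fin by blast
  qed
  have Seq: "card (S H a b (map \<sigma> j) (map \<sigma> i)) = card (S H a b j i)"
    if FH: "F H" and sA: "\<sigma> \<in> A" and ab: "set a \<subseteq> verts H" "set b \<subseteq> verts H" for H a b j i \<sigma>
    using Sle[OF FH sA ab, of j i] Sle[OF FH Ainv[OF sA] ab, of "map \<sigma> j" "map \<sigma> i"] invinv[OF sA]
    by simp
  have hat_inv: "hatT G H a b (map \<sigma> j) (map \<sigma> i) = hatT G H a b j i"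
    if "(H,a,b) \<in> skewcat F k l" "\<sigma> \<in> A" for H a b k l \<sigma> j i
    using that hatGK hatK Seq unfolding skewcat_def by auto
  have hat_supp: "hatT G H a b j i = 0"
    if "(H,a,b) \<in> skewcat F k l" "\<not> (j \<in> idx n l \<and> i \<in> idx n k)" for H a b k l j i
  proof -
    have FH: "F H" and ab: "length a = k" "set a \<subseteq> verts H" "length b = l" "set b \<subseteq> verts H"
      using that(1) unfolding skewcat_def by auto
    have "S H a b j i = {}"
    proof (rule ccontr)
      assume "S H a b j i \<noteq> {}"
      then obtain \<phi> where \<phi>: "\<phi> \<in> verts H \<rightarrow>\<^sub>E V" "map \<phi> a = i" "map \<phi> b = j" unfolding S_def by auto
      have "set (map \<phi> a) \<subseteq> V" "set (map \<phi> b) \<subseteq> V" using \<phi>(1) ab by auto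
      hence "i \<in> idx n k" "j \<in> idx n l" using \<phi> ab unfolding idx_def V_def by auto
      thus False using that(2) by simp
    qed
    thus ?thesis using hatGK[OF FH] hatK by simp
  qed
  show ?thesis unfolding A_def[symmetric]
  proof (intro allI)
    fix k l
    define Inv where "Inv T \<longleftrightarrow> (\<forall>j i. \<not> (j \<in> idx n l \<and> i \<in> idx n k) \<longrightarrow> T j i = 0) \<and>
        (\<forall>\<sigma>\<in>A. \<forall>j i. T (map \<sigma> j) (map \<sigma> i) = T j i)" for T :: "nat list \<Rightarrow> nat list \<Rightarrow> complex"
    have Inv_pi: "T \<in> perm_intertwiners n A k l" if "Inv T" for T
    proof -
      have supp: "\<forall>j i. \<not> (j \<in> idx n l \<and> i \<in> idx n k) \<longrightarrow> T j i = 0"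
        and inv: "\<And>\<sigma> j i. \<sigma> \<in> A \<Longrightarrow> T (map \<sigma> j) (map \<sigma> i) = T j i"
        using that unfolding Inv_def by auto
      have "(\<Sum>m\<in>idx n k. T j m * perm_tensor \<sigma> m i) = (\<Sum>m\<in>idx n l. perm_tensor \<sigma> j m * T m i)"
        if "\<sigma> \<in> A" "j \<in> idx n l" "i \<in> idx n k" for \<sigma> j i
      proof -
        have p: "\<sigma> permutes {1..n}" using Aperm[OF that(1)] V_def by simp
        have "(\<Sum>m\<in>idx n k. T j m * perm_tensor \<sigma> m i) = T j (map \<sigma> i)" using sum_pt1[OF p that(3)] .
        also have "\<dots> = T (map \<sigma> (map (inv \<sigma>) j)) (map \<sigma> i)" using invinv[OF that(1)] by simp
        also have "\<dots> = T (map (inv \<sigma>) j) i" using inv[OF that(1)] .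
        also have "\<dots> = (\<Sum>m\<in>idx n l. perm_tensor \<sigma> j m * T m i)" using sum_pt2[OF p that(2)] by simp
        finally show ?thesis .
      qed
      thus ?thesis using supp unfolding perm_intertwiners_def by blast
    qed
    have gen_Inv: "Inv X" if hX: "X \<in> {hatT G H a b | H a b. (H, a, b) \<in> skewcat F k l}" for X
    proof -
      obtain H a b where X: "X = hatT G H a b" and s: "(H, a, b) \<in> skewcat F k l" using hX by blast
      show ?thesis unfolding Inv_def X using hat_inv[OF s] hat_supp[OF s] by blast
    qed
    have span_Inv: "Inv T" if hT: "T \<in> CG F G k l" for T
    proof -
      obtain B c where B: "finite B" "B \<subseteq> {hatT G H a b | H a b. (H, a, b) \<in> skewcat F k l}"
        "T = (\<lambda>j i. \<Sum>X\<in>B. c X * X j i)" using hT unfolding CG_def cspan_def by blast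
      have BI: "Inv X" if "X \<in> B" for X using gen_Inv B(2) that by blast
      show ?thesis unfolding Inv_def B(3)
      proof (intro conjI allI impI ballI)
        fix j i assume "\<not> (j \<in> idx n l \<and> i \<in> idx n k)"
        thus "(\<Sum>X\<in>B. c X * X j i) = 0" using BI unfolding Inv_def by (intro sum.neutral) auto
      next
        fix \<sigma> j i assume "\<sigma> \<in> A"
        thus "(\<Sum>X\<in>B. c X * X (map \<sigma> j) (map \<sigma> i)) = (\<Sum>X\<in>B. c X * X j i)"
          using BI unfolding Inv_def by (intro sum.cong) auto
      qed
    qed
    show "CG F G k l = perm_intertwiners n A k l"
    proof
      show "CG F G k l \<subseteq> perm_intertwiners n A k l" using span_Inv Inv_pi by blast
      show "perm_intertwiners n A k l \<subseteq> CG F G k l"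
      proof
        fix T assume T: "T \<in> perm_intertwiners n A k l"
        have supp: "T j i = 0" if "\<not> (j \<in> idx n l \<and> i \<in> idx n k)" for j i
          using T that unfolding perm_intertwiners_def by blast
        have comm: "T j (map \<sigma> i) = T (map (inv \<sigma>) j) i" if "\<sigma> \<in> A" "j \<in> idx n l" "i \<in> idx n k" for \<sigma> j i
        proof -
          have p: "\<sigma> permutes {1..n}" using Aperm[OF that(1)] V_def by simp
          have "T j (map \<sigma> i) = (\<Sum>m\<in>idx n k. T j m * perm_tensor \<sigma> m i)" using sum_pt1[OF p that(3)] by simp
          also have "\<dots> = (\<Sum>m\<in>idx n l. perm_tensor \<sigma> j m * T m i)"
            using T that unfolding perm_intertwiners_def by blast
          also have "\<dots> = T (map (inv \<sigma>) j) i" using sum_pt2[OF p that(2)] .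
          finally show ?thesis .
        qed
        have inv: "T (map \<sigma> j) (map \<sigma> i) = T j i" if "\<sigma> \<in> A" "j \<in> idx n l" "i \<in> idx n k" for \<sigma> j i
        proof -
          have p: "\<sigma> permutes {1..n}" using Aperm[OF that(1)] V_def by simp
          have "map \<sigma> j \<in> idx n l" using map_idx[OF p that(2)] .
          from comm[OF that(1) this that(3)] show ?thesis using invinv[OF that(1)] by simp
        qed
        define P where "P = idx n l \<times> idx n k"
        have finP: "finite P" unfolding P_def using idx_finite by simp
        have cardA: "hatT G K i0 j0 j i = of_nat (card {\<sigma>\<in>A. map \<sigma> i0 = i \<and> map \<sigma> j0 = j})"
          if i0: "set i0 \<subseteq> V" and j0: "set j0 \<subseteq> V" for i0 j0 j i
        proof -
          have "bij_betw (\<lambda>\<sigma>. restrict \<sigma> V) {\<sigma>\<in>A. map \<sigma> i0 = i \<and> map \<sigma> j0 = j} (S K i0 j0 j i)"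
          proof (rule bij_betw_byWitness[where f' = "\<lambda>\<phi> x. if x \<in> V then \<phi> x else x"])
            show "\<forall>\<sigma>\<in>{\<sigma>\<in>A. map \<sigma> i0 = i \<and> map \<sigma> j0 = j}. (\<lambda>x. if x \<in> V then restrict \<sigma> V x else x) = \<sigma>"
              using Aperm permutes_not_in by fastforce
            show "\<forall>\<phi>\<in>S K i0 j0 j i. restrict (\<lambda>x. if x \<in> V then \<phi> x else x) V = \<phi>"
            proof
              fix \<phi> assume "\<phi> \<in> S K i0 j0 j i"
              hence "\<phi> \<in> extensional V" unfolding S_def KV by (auto simp: PiE_iff)
              thus "restrict (\<lambda>x. if x \<in> V then \<phi> x else x) V = \<phi>"
                by (auto simp: restrict_def extensional_def fun_eq_iff)
            qed
            show "(\<lambda>\<sigma>. restrict \<sigma> V) ` {\<sigma>\<in>A. map \<sigma> i0 = i \<and> map \<sigma> j0 = j} \<subseteq> S K i0 j0 j i"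
            proof
              fix \<psi> assume "\<psi> \<in> (\<lambda>\<sigma>. restrict \<sigma> V) ` {\<sigma>\<in>A. map \<sigma> i0 = i \<and> map \<sigma> j0 = j}"
              then obtain \<sigma> where s: "\<sigma> \<in> A" "map \<sigma> i0 = i" "map \<sigma> j0 = j" and \<psi>: "\<psi> = restrict \<sigma> V" by blast
              have p: "\<sigma> permutes V" using Aperm[OF s(1)] .
              have "\<psi> \<in> verts K \<rightarrow>\<^sub>E V" using permutes_in_image[OF p] KV unfolding \<psi> by auto
              moreover have "inj_hom K K \<psi>" unfolding inj_hom_def
              proof (intro conjI allI impI)
                show "\<psi> ` verts K \<subseteq> verts K" using permutes_in_image[OF p] KV unfolding \<psi> by auto
                show "inj_on \<psi> (verts K)" unfolding \<psi> KV
                  by (simp add: inj_on_restrict_iff permutes_inj_on[OF p])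
                fix u v assume "adj K u v"
                moreover hence "u \<in> V" "v \<in> V" using K_wf KV unfolding wf_graph_def by auto
                ultimately show "adj K (\<psi> u) (\<psi> v)" using Aadj[OF s(1)] unfolding \<psi> by simp
              qed
              moreover have "map \<psi> i0 = i" "map \<psi> j0 = j" using s i0 j0 unfolding \<psi> by auto
              ultimately show "\<psi> \<in> S K i0 j0 j i" unfolding S_def by blast
            qed
            show "(\<lambda>\<phi> x. if x \<in> V then \<phi> x else x) ` S K i0 j0 j i \<subseteq> {\<sigma>\<in>A. map \<sigma> i0 = i \<and> map \<sigma> j0 = j}"
            proof
              fix \<sigma> assume "\<sigma> \<in> (\<lambda>\<phi> x. if x \<in> V then \<phi> x else x) ` S K i0 j0 j i"
              then obtain \<phi> where \<phi>: "\<phi> \<in> S K i0 j0 j i" and \<sigma>: "\<sigma> = (\<lambda>x. if x \<in> V then \<phi> x else x)" by blast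
              have E: "\<phi> \<in> V \<rightarrow>\<^sub>E V" and h: "inj_hom K K \<phi>" and m: "map \<phi> i0 = i" "map \<phi> j0 = j"
                using \<phi> unfolding S_def KV by auto
              have KV': "verts K = {1..n}" using KV V_def by simp
              have "\<sigma> \<in> aut_group n K" unfolding \<sigma> V_def
              proof (rule injhom_aut[OF K_wf KV'])
                show "\<phi> ` {1..n} \<subseteq> {1..n}" using E V_def by auto
                show "inj_on \<phi> {1..n}" using h KV' unfolding inj_hom_def by simp
                show "\<And>u v. adj K u v \<Longrightarrow> adj K (\<phi> u) (\<phi> v)" using h unfolding inj_hom_def by simp
              qed
              moreover have "map \<sigma> i0 = i" "map \<sigma> j0 = j" using m i0 j0 unfolding \<sigma> by auto
              ultimately show "\<sigma> \<in> {\<sigma>\<in>A. map \<sigma> i0 = i \<and> map \<sigma> j0 = j}" unfolding A_def by blast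
            qed
          qed
          hence "card {\<sigma>\<in>A. map \<sigma> i0 = i \<and> map \<sigma> j0 = j} = card (S K i0 j0 j i)" by (rule bij_betw_same_card)
          thus ?thesis using hatGK[OF K_F] hatK by simp
        qed
        have key: "of_nat (card A) * T j i = (\<Sum>p\<in>P. T (fst p) (snd p) * hatT G K (snd p) (fst p) j i)" for j i
        proof -
          have "(\<Sum>p\<in>P. T (fst p) (snd p) * hatT G K (snd p) (fst p) j i) =
              (\<Sum>p\<in>P. \<Sum>\<sigma>\<in>A. if map \<sigma> (snd p) = i \<and> map \<sigma> (fst p) = j then T (fst p) (snd p) else 0)"
          proof (rule sum.cong[OF refl])
            fix p assume "p \<in> P"
            hence "set (snd p) \<subseteq> V" "set (fst p) \<subseteq> V" unfolding P_def idx_def V_def by auto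
            hence "hatT G K (snd p) (fst p) j i = of_nat (card {\<sigma>\<in>A. map \<sigma> (snd p) = i \<and> map \<sigma> (fst p) = j})"
              using cardA by blast
            also have "\<dots> = (\<Sum>\<sigma>\<in>A. if map \<sigma> (snd p) = i \<and> map \<sigma> (fst p) = j then 1 else 0)"
              using Afin by (simp add: sum.inter_filter[symmetric])
            finally show "T (fst p) (snd p) * hatT G K (snd p) (fst p) j i =
                (\<Sum>\<sigma>\<in>A. if map \<sigma> (snd p) = i \<and> map \<sigma> (fst p) = j then T (fst p) (snd p) else 0)"
              by (auto simp: sum_distrib_left intro!: sum.cong)
          qed
          also have "\<dots> = (\<Sum>\<sigma>\<in>A. \<Sum>p\<in>P. if map \<sigma> (snd p) = i \<and> map \<sigma> (fst p) = j then T (fst p) (snd p) else 0)"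
            by (rule sum.swap)
          also have "\<dots> = (\<Sum>\<sigma>\<in>A. T j i)"
          proof (rule sum.cong[OF refl])
            fix \<sigma> assume sA: "\<sigma> \<in> A"
            have p: "\<sigma> permutes {1..n}" "inv \<sigma> permutes {1..n}"
              using Aperm[OF sA] Aperm[OF Ainv[OF sA]] V_def by simp_all
            define q where "q = (map (inv \<sigma>) j, map (inv \<sigma>) i)"
            have c: "map \<sigma> (snd p) = i \<and> map \<sigma> (fst p) = j \<longleftrightarrow> p = q" for p
              unfolding q_def using invinv[OF sA] by (cases p) auto
            have "(\<Sum>p\<in>P. if map \<sigma> (snd p) = i \<and> map \<sigma> (fst p) = j then T (fst p) (snd p) else 0)
                = (\<Sum>p\<in>P. if p = q then T (fst p) (snd p) else 0)" unfolding c ..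
            also have "\<dots> = (if q \<in> P then T (fst q) (snd q) else 0)" using finP by (simp add: sum.delta')
            also have "\<dots> = T j i"
            proof (cases "j \<in> idx n l \<and> i \<in> idx n k")
              case True
              hence "q \<in> P" unfolding q_def P_def using map_idx[OF p(2)] by auto
              thus ?thesis using inv[OF Ainv[OF sA]] True unfolding q_def by simp
            next
              case False
              hence "q \<notin> P" unfolding q_def P_def using map_idx_iff[OF p(2)] by auto
              thus ?thesis using supp[OF False] by simp
            qed
            finally show "(\<Sum>p\<in>P. if map \<sigma> (snd p) = i \<and> map \<sigma> (fst p) = j then T (fst p) (snd p) else 0) = T j i" .
          qed
          also have "\<dots> = of_nat (card A) * T j i" by simp
          finally show ?thesis by simp
        qed
        have Teq: "T = (\<lambda>j i. \<Sum>p\<in>P. (T (fst p) (snd p) / of_nat (card A)) * hatT G K (snd p) (fst p) j i)"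
        proof (intro ext)
          fix j i
          have cA: "(of_nat (card A) :: complex) \<noteq> 0" using Acard by simp
          have "T j i = (of_nat (card A) * T j i) / of_nat (card A)" using cA by simp
          also have "\<dots> = (\<Sum>p\<in>P. T (fst p) (snd p) * hatT G K (snd p) (fst p) j i) / of_nat (card A)"
            unfolding key ..
          also have "\<dots> = (\<Sum>p\<in>P. (T (fst p) (snd p) / of_nat (card A)) * hatT G K (snd p) (fst p) j i)"
            by (simp add: sum_divide_distrib)
          finally show "T j i = (\<Sum>p\<in>P. (T (fst p) (snd p) / of_nat (card A)) * hatT G K (snd p) (fst p) j i)" .
        qed
        have "(\<lambda>j i. \<Sum>p\<in>P. (T (fst p) (snd p) / of_nat (card A)) * hatT G K (snd p) (fst p) j i)
            \<in> cspan {hatT G H a b | H a b. (H, a, b) \<in> skewcat F k l}"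
        proof (rule cspan_sum[OF finP])
          fix p assume "p \<in> P"
          hence "(K, snd p, fst p) \<in> skewcat F k l" using K_F KV unfolding P_def idx_def skewcat_def V_def by auto
          thus "hatT G K (snd p) (fst p) \<in> {hatT G H a b | H a b. (H, a, b) \<in> skewcat F k l}" by blast
        qed
        thus "T \<in> CG F G k l" unfolding CG_def using Teq by simp
      qed
    qed
  qed
qed

end
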